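(* Let $B_1,\dots,B_n$ be components with pairwise disjoint action sets and $\gamma$ a set of interactions over them. For each action $a\in\mathit{Act}(\gamma)$ let $k_a\ge0$ be a constant such that, in every execution of the component owning $a$, any two consecutive executions of $a$ are separated by at least $k_a$ time units. Let $\mathit{CI}(B_i^h)$ be the component invariants and $\mathit{II}(\gamma)$ the interaction invariant. Then $\Phi=\exists\mathcal{H}_A\exists\mathcal{H}_\gamma.\big(\bigwedge_i\mathit{CI}(B_i^h)\wedge\mathit{II}(\gamma)\wedge\mathcal{E}^*(\gamma)\wedge\mathcal{S}(\gamma)\big)$ is an invariant of $\|_\gamma B_i$.
   Context: Components and semantics: a component is a timed automaton $B=(L,A,\mathcal{X},T,\mathsf{tpc},s_0)$ with locations $L$, actions $A$, clocks $\mathcal{X}$, edges $(l,(a,g,r),l')\in T$ (action, clock-constraint guard, reset set), time progress conditions $\mathsf{tpc}(l)$, initial configuration $s_0=(l_0,c_0)$. States $(l,\mathbf{v})$, $\mathbf{v}$ a valuation in $\mathbb{R}_{\ge0}$; time transitions $(l,\mathbf{v})\xrightarrow{\delta}(l,\mathbf{v}+\delta)$ if $\mathsf{tpc}(l)$ holds along $[0,\delta]$; discrete transitions $(l,\mathbf{v})\xrightarrow{a}(l',\mathbf{v}[r])$ if $(l,(a,g,r),l')\in T$, $\mathbf{v}\models g$, $\mathbf{v}[r]\models\mathsf{tpc}(l')$; initial states $(l_0,\mathbf{v}_0)$ with $\mathbf{v}_0\models c_0$. A state predicate is an invariant if it holds in every reachable state. Systems: for components $B_i$ with pairwise disjoint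 action sets $A_i$, an interaction is a nonempty $\alpha\subseteq\bigcup_iA_i$ with at most one action per component; $\mathit{Act}(\gamma)=\bigcup_{\alpha\in\gamma}\alpha$. $\|_\gamma B_i$ has locations $\times_iL_i$, clocks $\bigcup_i\mathcal{X}_i$, conjunction of tpc's and initial constraints, and for each $\alpha=\{a_i\}_{i\in I}\in\gamma$ and edges $(l_i,(a_i,g_i,r_i),l'_i)\in T_i$ ($i\in I$) a joint edge with guard $\bigwedge_{i\in I}g_i$, reset $\bigcup_{i\in I}r_i$, moving exactly the components in $I$. History clocks: $B^h$ adds fresh clocks $h_0$ and $h_a$ ($a\in A$), adds $h_a$ to the resets of each edge labelled $a$, initial constraint $c_0\wedge h_0=0\wedge\bigwedge_{a\in A}h_a>0$; $h_0$ is shared by all components and never reset nor tested; $\mathcal{H}_A$ is the set of $h_0$ and all $h_a$, $a\in\bigcup_iA_i$. Interaction history clocks $\mathcal{H}_\gamma=\{h_\alpha\mid\alpha\in\gamma\}$ (in the extended system they are reset exactly when $\alpha$ is executed). $\exists S$ quantifies over nonnegative reals. Invariants used: $\mathit{CI}(B^h)$ is the disjunction of $\mathit{at}(l)\wedge\zeta$ over all symbolic states $(l,\zeta)$ reachable in the (normalised) zone graph of $B^h$; it is an invariant of $B^h$. $\mathit{II}(\gamma)$ is a predicate over locations only which is an invariant of $\|_\gamma B_i$. Glue constraints: $\mathcal{E}^*(\gamma)=\bigwedge_{a\in\mathit{Act}(\gamma)}h_a=\min_{\alpha\in\gamma,\,a\in\alpha}h_\alpha$ and $\mathcal{S}(\gamma)=\bigwedge_{a\in\mathit{Act}(\gamma)}\bigwedge_{\alpha\ne\beta\in\gamma,\,a\in\alpha\cap\beta}|h_\alpha-h_\beta|\ge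 k_a$. *)

theory Defs
  imports Complex_Main
begin

type_synonym ('l,'a,'c) edge = "'l \<times> 'a \<times> (('c \<Rightarrow> real) \<Rightarrow> bool) \<times> 'c set \<times> 'l"

record ('l,'a,'c) ta =
  acts  :: "'a set"
  edges :: "('l,'a,'c) edge set"
  tpc   :: "'l \<Rightarrow> ('c \<Rightarrow> real) \<Rightarrow> bool"
  loc0  :: "'l"
  c0    :: "('c \<Rightarrow> real) \<Rightarrow> bool"

definition esrc :: "('l,'a,'c) edge \<Rightarrow> 'l" where "esrc e = fst e"
definition eact :: "('l,'a,'c) edge \<Rightarrow> 'a" where "eact e = fst (snd e)"
definition eguard :: "('l,'a,'c) edge \<Rightarrow> ('c \<Rightarrow> real) \<Rightarrow> bool" where
  "eguard e = fst (snd (snd e))"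
definition ereset :: "('l,'a,'c) edge \<Rightarrow> 'c set" where "ereset e = fst (snd (snd (snd e)))"
definition etgt :: "('l,'a,'c) edge \<Rightarrow> 'l" where "etgt e = snd (snd (snd (snd e)))"

definition vshift :: "('c \<Rightarrow> real) \<Rightarrow> real \<Rightarrow> ('c \<Rightarrow> real)" where
  "vshift v d = (\<lambda>x. v x + d)"

definition vreset :: "('c \<Rightarrow> real) \<Rightarrow> 'c set \<Rightarrow> ('c \<Rightarrow> real)" where
  "vreset v r = (\<lambda>x. if x \<in> r then 0 else v x)"

datatype 'a label = Del real | Dis 'a

inductive step :: "('l,'a,'c,'z) ta_scheme \<Rightarrow> 'l \<times> ('c \<Rightarrow> real) \<Rightarrow> 'a label \<Rightarrow> 'l \<times> ('c \<Rightarrow> real) \<Rightarrow> bool"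
  for B where
  delay: "\<lbrakk> d \<ge> 0; \<forall>t\<in>{0..d}. tpc B l (vshift v t) \<rbrakk> \<Longrightarrow> step B (l, v) (Del d) (l, vshift v d)"
| disc: "\<lbrakk> (l, a, g, r, l') \<in> edges B; g v; tpc B l' (vreset v r) \<rbrakk>
          \<Longrightarrow> step B (l, v) (Dis a) (l', vreset v r)"

definition initial :: "('l,'a,'c,'z) ta_scheme \<Rightarrow> 'l \<times> ('c \<Rightarrow> real) \<Rightarrow> bool" where
  "initial B s \<longleftrightarrow> fst s = loc0 B \<and> (\<forall>x. snd s x \<ge> 0) \<and> c0 B (snd s)"

inductive reachable :: "('l,'a,'c,'z) ta_scheme \<Rightarrow> 'l \<times> ('c \<Rightarrow> real) \<Rightarrow> bool" for B where
  init: "initial B s \<Longrightarrow> reachable B s"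
| stp: "\<lbrakk> reachable B s; step B s lb s' \<rbrakk> \<Longrightarrow> reachable B s'"

definition invariant :: "('l,'a,'c,'z) ta_scheme \<Rightarrow> ('l \<times> ('c \<Rightarrow> real) \<Rightarrow> bool) \<Rightarrow> bool" where
  "invariant B P \<longleftrightarrow> (\<forall>s. reachable B s \<longrightarrow> P s)"

definition run :: "('l,'a,'c,'z) ta_scheme \<Rightarrow> ('l \<times> ('c \<Rightarrow> real)) list \<Rightarrow> 'a label list \<Rightarrow> bool" where
  "run B ss ls \<longleftrightarrow> length ss = Suc (length ls) \<and> initial B (ss ! 0)
     \<and> (\<forall>i < length ls. step B (ss ! i) (ls ! i) (ss ! Suc i))"

fun delay_of :: "'a label \<Rightarrow> real" where
  "delay_of (Del d) = d"
| "delay_of (Dis _) = 0"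

definition min_sep :: "('l,'a,'c,'z) ta_scheme \<Rightarrow> 'a \<Rightarrow> real \<Rightarrow> bool" where
  "min_sep B a k \<longleftrightarrow> (\<forall>ss ls. run B ss ls \<longrightarrow>
     (\<forall>i j. i < j \<and> j < length ls \<and> ls ! i = Dis a \<and> ls ! j = Dis a
        \<and> (\<forall>m. i < m \<and> m < j \<longrightarrow> ls ! m \<noteq> Dis a)
        \<longrightarrow> k \<le> (\<Sum>m\<in>{i<..<j}. delay_of (ls ! m))))"

datatype ('a,'c) hclock = Orig 'c | H0 | HA 'a

definition hist :: "('l,'a,'c) ta \<Rightarrow> ('l,'a,('a,'c) hclock) ta" where
  "hist B = \<lparr> acts = acts B,
     edges = (\<lambda>(l, a, g, r, l'). (l, a, (\<lambda>w. g (w \<circ> Orig)), Orig ` r \<union> {HA a}, l')) ` edges B,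
     tpc = (\<lambda>l w. tpc B l (w \<circ> Orig)),
     loc0 = loc0 B,
     c0 = (\<lambda>w. c0 B (w \<circ> Orig) \<and> w H0 = 0 \<and> (\<forall>a\<in>acts B. w (HA a) > 0)) \<rparr>"

text \<open>Component i is B i (i < n). Its action a is the global action (i, a) and its
clock c the global clock (i, c) (pairwise disjoint by construction).
An interaction is a set of global actions.\<close>

definition view :: "(nat \<times> 'c \<Rightarrow> real) \<Rightarrow> nat \<Rightarrow> ('c \<Rightarrow> real)" where
  "view V i = (\<lambda>c. V (i, c))"

definition wf_interactions :: "nat \<Rightarrow> (nat \<Rightarrow> ('l,'a,'c) ta) \<Rightarrow> (nat \<times> 'a) set set \<Rightarrow> bool" where
  "wf_interactions n B \<gamma> \<longleftrightarrow> (\<forall>\<alpha>\<in>\<gamma>. \<alpha> \<noteq> {}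
     \<and> (\<forall>(i, a)\<in>\<alpha>. i < n \<and> a \<in> acts (B i))
     \<and> (\<forall>(i, a)\<in>\<alpha>. \<forall>(j, b)\<in>\<alpha>. i = j \<longrightarrow> a = b))"

definition compose :: "nat \<Rightarrow> (nat \<Rightarrow> ('l,'a,'c) ta) \<Rightarrow> (nat \<times> 'a) set set
    \<Rightarrow> (nat \<Rightarrow> 'l, (nat \<times> 'a) set, nat \<times> 'c) ta" where
  "compose n B \<gamma> = \<lparr> acts = \<gamma>,
     edges = {(L, \<alpha>, g, r, L') | L \<alpha> g r L'. \<alpha> \<in> \<gamma> \<and>
        (\<exists>e. (\<forall>i a. (i, a) \<in> \<alpha> \<longrightarrow> e i \<in> edges (B i) \<and> esrc (e i) = L i \<and> eact (e i) = a)
           \<and> g = (\<lambda>V. \<forall>i\<in>fst ` \<alpha>. eguard (e i) (view V i))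
           \<and> r = {(i, c). i \<in> fst ` \<alpha> \<and> c \<in> ereset (e i)}
           \<and> L' = (\<lambda>j. if j \<in> fst ` \<alpha> then etgt (e j) else L j))},
     tpc = (\<lambda>L V. \<forall>i<n. tpc (B i) (L i) (view V i)),
     loc0 = (\<lambda>i. loc0 (B i)),
     c0 = (\<lambda>V. \<forall>i<n. c0 (B i) (view V i)) \<rparr>"

text \<open>Valuation of the clocks of B_i^h induced by the system valuation V, the
shared clock h0 and the action history clocks ha.\<close>
definition hview :: "(nat \<times> 'c \<Rightarrow> real) \<Rightarrow> real \<Rightarrow> (nat \<times> 'a \<Rightarrow> real) \<Rightarrow> nat
    \<Rightarrow> (('a,'c) hclock \<Rightarrow> real)" where
  "hview V h0 ha i = (\<lambda>x. case x of Orig c \<Rightarrow> V (i, c) | H0 \<Rightarrow> h0 | HA a \<Rightarrow> ha (i, a))"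

definition Estar :: "(nat \<times> 'a) set set \<Rightarrow> (nat \<times> 'a \<Rightarrow> real) \<Rightarrow> ((nat \<times> 'a) set \<Rightarrow> real) \<Rightarrow> bool" where
  "Estar \<gamma> ha hg \<longleftrightarrow> (\<forall>a\<in>\<Union>\<gamma>. ha a = Min (hg ` {\<alpha>\<in>\<gamma>. a \<in> \<alpha>}))"

definition Sep :: "(nat \<times> 'a) set set \<Rightarrow> (nat \<times> 'a \<Rightarrow> real) \<Rightarrow> ((nat \<times> 'a) set \<Rightarrow> real) \<Rightarrow> bool" where
  "Sep \<gamma> k hg \<longleftrightarrow> (\<forall>a\<in>\<Union>\<gamma>. \<forall>\<alpha>\<in>\<gamma>. \<forall>\<beta>\<in>\<gamma>. \<alpha> \<noteq> \<beta> \<and> a \<in> \<alpha> \<and> a \<in> \<beta> \<longrightarrow> \<bar>hg \<alpha> - hg \<beta>\<bar> \<ge> k a)"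

definition Phi :: "nat \<Rightarrow> (nat \<times> 'a) set set \<Rightarrow> (nat \<Rightarrow> 'l \<times> (('a,'c) hclock \<Rightarrow> real) \<Rightarrow> bool)
    \<Rightarrow> ((nat \<Rightarrow> 'l) \<Rightarrow> bool) \<Rightarrow> (nat \<times> 'a \<Rightarrow> real) \<Rightarrow> (nat \<Rightarrow> 'l) \<times> (nat \<times> 'c \<Rightarrow> real) \<Rightarrow> bool" where
  "Phi n \<gamma> CI II k s \<longleftrightarrow> (\<exists>h0 ha hg. h0 \<ge> 0 \<and> (\<forall>x. ha x \<ge> 0) \<and> (\<forall>\<alpha>\<in>\<gamma>. hg \<alpha> \<ge> 0)
     \<and> (\<forall>i<n. CI i (fst s i, hview (snd s) h0 ha i))
     \<and> II (fst s) \<and> Estar \<gamma> ha hg \<and> Sep \<gamma> k hg)"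

end

theory Submission
  imports Defs
begin

definition RC :: "'a label list \<Rightarrow> 'a \<Rightarrow> real \<Rightarrow> real \<Rightarrow> bool" where
  "RC ls a h kk \<longleftrightarrow> (Dis a \<notin> set ls \<longrightarrow> kk \<le> h) \<and>
     (\<forall>j<length ls. ls!j = Dis a \<and> (\<forall>m. j<m \<and> m<length ls \<longrightarrow> ls!m \<noteq> Dis a)
        \<longrightarrow> (\<Sum>m\<in>{j<..<length ls}. delay_of (ls!m)) \<le> h)"

lemma sum_app:
  assumes "j < length ls"
  shows "(\<Sum>m\<in>{j<..<length (ls@[x])}. delay_of ((ls@[x])!m))
       = (\<Sum>m\<in>{j<..<length ls}. delay_of (ls!m)) + delay_of x"
proof -
  have e: "{j<..<length (ls@[x])} = insert (length ls) {j<..<length ls}" using assms by auto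
  have "(\<Sum>m\<in>{j<..<length ls}. delay_of ((ls@[x])!m)) = (\<Sum>m\<in>{j<..<length ls}. delay_of (ls!m))"
    by (rule sum.cong) (auto simp: nth_append)
  then show ?thesis unfolding e by (simp add: nth_append)
qed

lemma RC_del: "RC ls a h kk \<Longrightarrow> d \<ge> 0 \<Longrightarrow> RC (ls@[Del d]) a (h+d) kk"
  unfolding RC_def
proof (intro conjI allI impI)
  assume A: "(Dis a \<notin> set ls \<longrightarrow> kk \<le> h) \<and> (\<forall>j<length ls. ls!j = Dis a \<and> (\<forall>m. j<m \<and> m<length ls \<longrightarrow> ls!m \<noteq> Dis a)
        \<longrightarrow> (\<Sum>m\<in>{j<..<length ls}. delay_of (ls!m)) \<le> h)" and d: "d \<ge> 0"
  { assume "Dis a \<notin> set (ls @ [Del d])" then show "kk \<le> h + d" using A d by auto }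
  fix j assume j: "j < length (ls @ [Del d])" and
    c: "(ls @ [Del d]) ! j = Dis a \<and> (\<forall>m. j < m \<and> m < length (ls @ [Del d]) \<longrightarrow> (ls @ [Del d]) ! m \<noteq> Dis a)"
  have jl: "j < length ls" using j c by (auto simp: nth_append split: if_splits)
  have "ls!j = Dis a \<and> (\<forall>m. j<m \<and> m<length ls \<longrightarrow> ls!m \<noteq> Dis a)"
    using c jl by (auto simp: nth_append)
  then have "(\<Sum>m\<in>{j<..<length ls}. delay_of (ls!m)) \<le> h" using A jl by blast
  then show "(\<Sum>m\<in>{j<..<length (ls @ [Del d])}. delay_of ((ls @ [Del d]) ! m)) \<le> h + d"
    using sum_app[OF jl] by simp
qed

lemma RC_other: "RC ls a h kk \<Longrightarrow> b \<noteq> a \<Longrightarrow> RC (ls@[Dis b]) a h kk"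
  unfolding RC_def
proof (intro conjI allI impI)
  assume A: "(Dis a \<notin> set ls \<longrightarrow> kk \<le> h) \<and> (\<forall>j<length ls. ls!j = Dis a \<and> (\<forall>m. j<m \<and> m<length ls \<longrightarrow> ls!m \<noteq> Dis a)
        \<longrightarrow> (\<Sum>m\<in>{j<..<length ls}. delay_of (ls!m)) \<le> h)" and d: "b \<noteq> a"
  { assume "Dis a \<notin> set (ls @ [Dis b])" then show "kk \<le> h" using A d by auto }
  fix j assume j: "j < length (ls @ [Dis b])" and
    c: "(ls @ [Dis b]) ! j = Dis a \<and> (\<forall>m. j < m \<and> m < length (ls @ [Dis b]) \<longrightarrow> (ls @ [Dis b]) ! m \<noteq> Dis a)"
  have jl: "j < length ls" using j c d by (auto simp: nth_append split: if_splits)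
  have "ls!j = Dis a \<and> (\<forall>m. j<m \<and> m<length ls \<longrightarrow> ls!m \<noteq> Dis a)"
    using c jl by (auto simp: nth_append)
  then have "(\<Sum>m\<in>{j<..<length ls}. delay_of (ls!m)) \<le> h" using A jl by blast
  then show "(\<Sum>m\<in>{j<..<length (ls @ [Dis b])}. delay_of ((ls @ [Dis b]) ! m)) \<le> h"
    using sum_app[OF jl] by simp
qed

lemma RC_self: "RC (ls@[Dis a]) a 0 kk"
  unfolding RC_def
proof (intro conjI allI impI)
  fix j assume j: "j < length (ls @ [Dis a])" and
    c: "(ls @ [Dis a]) ! j = Dis a \<and> (\<forall>m. j < m \<and> m < length (ls @ [Dis a]) \<longrightarrow> (ls @ [Dis a]) ! m \<noteq> Dis a)"
  have "j = length ls"
  proof (rule ccontr)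
    assume "j \<noteq> length ls" then have "j < length ls" using j by simp
    then show False using c by (auto simp: nth_append)
  qed
  moreover have "{length ls<..<Suc (length ls)} = {}" by auto
  ultimately show "(\<Sum>m\<in>{j<..<length (ls @ [Dis a])}. delay_of ((ls @ [Dis a]) ! m)) \<le> 0" by simp
qed simp

lemma run_ext: "run B ss ls \<Longrightarrow> step B (ss!length ls) l s' \<Longrightarrow> run B (ss@[s']) (ls@[l])"
  unfolding run_def
  by (auto simp: nth_append less_Suc_eq)

lemma RC_exec:
  assumes r: "run B ss ls" and st: "step B (ss!length ls) (Dis a) s'" and ms: "min_sep B a kk"
    and rc: "RC ls a h kk"
  shows "kk \<le> h"
proof (cases "Dis a \<in> set ls")
  case False then show ?thesis using rc by (simp add: RC_def)
next
  case True
  define P where "P = (\<lambda>j. j < length ls \<and> ls!j = Dis a)"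
  obtain j0 where "j0 < length ls" "ls!j0 = Dis a" using True by (auto simp: in_set_conv_nth)
  then have Pj0: "P j0" by (simp add: P_def)
  have bnd: "\<forall>y. P y \<longrightarrow> y \<le> length ls" by (auto simp: P_def)
  define j where "j = (GREATEST j. P j)"
  have Pj: "P j" unfolding j_def by (rule GreatestI_nat[of P j0 "length ls", OF Pj0]) (use bnd in auto)
  have gr: "\<And>m. P m \<Longrightarrow> m \<le> j" unfolding j_def by (rule Greatest_le_nat[where b="length ls"]) (use bnd in auto)
  have nb: "\<forall>m. j<m \<and> m<length ls \<longrightarrow> ls!m \<noteq> Dis a"
    using gr by (auto simp: P_def) (meson leD)
  have r2: "run B (ss@[s']) (ls@[Dis a])" by (rule run_ext[OF r st])
  have "kk \<le> (\<Sum>m\<in>{j<..<length ls}. delay_of ((ls@[Dis a])!m))"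
  proof -
    have ms': "\<And>i jj. i < jj \<and> jj < length (ls@[Dis a]) \<and> (ls@[Dis a]) ! i = Dis a \<and> (ls@[Dis a]) ! jj = Dis a
        \<and> (\<forall>m. i < m \<and> m < jj \<longrightarrow> (ls@[Dis a]) ! m \<noteq> Dis a)
        \<Longrightarrow> kk \<le> (\<Sum>m\<in>{i<..<jj}. delay_of ((ls@[Dis a]) ! m))"
      using ms r2 unfolding min_sep_def by blast
    show ?thesis
      by (rule ms'[of j "length ls"]) (use Pj nb in \<open>auto simp: P_def nth_append\<close>)
  qed
  also have "\<dots> = (\<Sum>m\<in>{j<..<length ls}. delay_of (ls!m))"
    by (rule sum.cong) (auto simp: nth_append)
  also have "\<dots> \<le> h" using rc Pj nb unfolding RC_def P_def by blast
  finally show ?thesis .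
qed


lemma hview_Orig[simp]: "hview V h0 ha i \<circ> Orig = view V i"
  by (auto simp: hview_def view_def)

lemma view_vshift: "view (vshift V d) i = vshift (view V i) d"
  by (auto simp: view_def vshift_def)

lemma hview_vshift: "vshift (hview V h0 ha i) d = hview (vshift V d) (h0+d) (\<lambda>x. ha x + d) i"
  by (auto simp: hview_def vshift_def split: hclock.splits)

lemma tpc_compose[simp]: "tpc (compose n B \<gamma>) L W = (\<forall>i<n. tpc (B i) (L i) (view W i))"
  by (simp add: compose_def)

lemma tpc_hist[simp]: "tpc (hist B) l w = tpc B l (w \<circ> Orig)"
  by (simp add: hist_def)

lemma fin_gamma:
  assumes "\<forall>i<n. finite (acts (B i))" "wf_interactions n B \<gamma>"
  shows "finite \<gamma>" "\<forall>\<alpha>\<in>\<gamma>. finite \<alpha>"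
proof -
  have sub: "\<forall>\<alpha>\<in>\<gamma>. \<alpha> \<subseteq> Sigma {..<n} (\<lambda>i. acts (B i))"
    using assms(2) unfolding wf_interactions_def by fast
  have fs: "finite (Sigma {..<n} (\<lambda>i. acts (B i)))" using assms(1) by auto
  have "\<gamma> \<subseteq> Pow (Sigma {..<n} (\<lambda>i. acts (B i)))" using sub by auto
  then show "finite \<gamma>" using fs by (meson finite_Pow_iff finite_subset)
  show "\<forall>\<alpha>\<in>\<gamma>. finite \<alpha>" using sub fs finite_subset by blast
qed

definition INV :: "nat \<Rightarrow> (nat \<Rightarrow> ('l,'a,'c) ta) \<Rightarrow> (nat\<times>'a) set set \<Rightarrow> (nat\<times>'a \<Rightarrow> real)
   \<Rightarrow> (nat \<Rightarrow> 'l) \<times> (nat\<times>'c \<Rightarrow> real) \<Rightarrow> bool" where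
"INV n B \<gamma> k s \<longleftrightarrow> (\<exists>h0 ha hg. h0 \<ge> 0 \<and> (\<forall>x. ha x \<ge> 0) \<and> (\<forall>\<alpha>\<in>\<gamma>. hg \<alpha> \<ge> 0)
 \<and> (\<forall>i<n. reachable (hist (B i)) (fst s i, hview (snd s) h0 ha i))
 \<and> (\<forall>i<n. \<exists>ss ls. run (B i) ss ls \<and> ss ! length ls = (fst s i, view (snd s) i)
       \<and> (\<forall>a. (i,a) \<in> \<Union>\<gamma> \<longrightarrow> RC ls a (ha (i,a)) (k (i,a))))
 \<and> Estar \<gamma> ha hg \<and> Sep \<gamma> k hg)"

lemma INV_init:
  assumes fin_acts: "\<forall>i<n. finite (acts (B i))"
    and wf: "wf_interactions n B \<gamma>"
    and k_nonneg: "\<forall>x\<in>\<Union>\<gamma>. k x \<ge> 0"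
    and ini: "initial (compose n B \<gamma>) s"
  shows "INV n B \<gamma> k s"
proof -
  obtain L V where s: "s = (L, V)" by (cases s)
  have L: "L = (\<lambda>i. loc0 (B i))" and V0: "\<forall>x. V x \<ge> 0" and c0: "\<forall>i<n. c0 (B i) (view V i)"
    using ini by (auto simp: initial_def compose_def s)
  have fg: "finite \<gamma>" and fa: "\<forall>\<alpha>\<in>\<gamma>. finite \<alpha>" using fin_gamma[OF fin_acts wf] by auto
  have fU: "finite (\<Union>\<gamma>)" using fg fa by auto
  obtain f :: "(nat\<times>'a) set \<Rightarrow> nat" and m where inj: "inj_on f \<gamma>"
    using finite_imp_inj_to_nat_seg[OF fg] by blast
  define K where "K = 1 + (\<Sum>x\<in>\<Union>\<gamma>. k x)"
  have Kk: "\<And>x. x \<in> \<Union>\<gamma> \<Longrightarrow> k x \<le> K - 1"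
  proof -
    fix x assume x: "x \<in> \<Union>\<gamma>"
    have "k x \<le> (\<Sum>x\<in>\<Union>\<gamma>. k x)" by (rule member_le_sum[OF x _ fU]) (use k_nonneg in blast)
    then show "k x \<le> K - 1" unfolding K_def by simp
  qed
  have K1: "K \<ge> 1" proof -
    have "0 \<le> (\<Sum>x\<in>\<Union>\<gamma>. k x)" by (rule sum_nonneg) (use k_nonneg in blast)
    then show ?thesis unfolding K_def by simp
  qed
  define hg where "hg = (\<lambda>\<alpha>. K * (1 + real (f \<alpha>)))"
  define ha where "ha = (\<lambda>x. if x \<in> \<Union>\<gamma> then Min (hg ` {\<alpha>\<in>\<gamma>. x\<in>\<alpha>}) else 1)"
  have hgK: "\<And>\<alpha>. hg \<alpha> \<ge> K" unfolding hg_def using K1 by simp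
  have haK: "\<And>x. x \<in> \<Union>\<gamma> \<Longrightarrow> ha x \<ge> K"
  proof -
    fix x assume x: "x \<in> \<Union>\<gamma>"
    have "finite (hg ` {\<alpha>\<in>\<gamma>. x\<in>\<alpha>})" using fg by simp
    moreover have "hg ` {\<alpha>\<in>\<gamma>. x\<in>\<alpha>} \<noteq> {}" using x by auto
    ultimately show "ha x \<ge> K" using x hgK by (simp add: ha_def Min_ge_iff)
  qed
  have hapos: "\<And>x. ha x \<ge> 1" using haK K1 by (force simp: ha_def)
  have Sp: "Sep \<gamma> k hg"
    unfolding Sep_def
  proof (intro ballI impI)
    fix a \<alpha> \<beta> assume a: "a \<in> \<Union>\<gamma>" and ab: "\<alpha> \<in> \<gamma>" "\<beta> \<in> \<gamma>" and c: "\<alpha> \<noteq> \<beta> \<and> a \<in> \<alpha> \<and> a \<in> \<beta>"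
    have "f \<alpha> \<noteq> f \<beta>" using inj ab c by (meson inj_on_eq_iff)
    then have "\<bar>real (f \<alpha>) - real (f \<beta>)\<bar> \<ge> 1" by linarith
    then have "K * \<bar>real (f \<alpha>) - real (f \<beta>)\<bar> \<ge> K * 1" using K1 by (intro mult_left_mono) auto
    moreover have "hg \<alpha> - hg \<beta> = K * (real (f \<alpha>) - real (f \<beta>))"
      unfolding hg_def by (simp add: algebra_simps)
    then have "\<bar>hg \<alpha> - hg \<beta>\<bar> = K * \<bar>real (f \<alpha>) - real (f \<beta>)\<bar>"
      using K1 by (simp add: abs_mult)
    ultimately show "k a \<le> \<bar>hg \<alpha> - hg \<beta>\<bar>" using Kk[OF a] by simp
  qed
  have Es: "Estar \<gamma> ha hg" unfolding Estar_def ha_def by simp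
  have n1: "\<forall>x. ha x \<ge> 0" using hapos by (meson order.trans zero_le_one)
  have n2: "\<forall>\<alpha>\<in>\<gamma>. hg \<alpha> \<ge> 0" using hgK K1 by (meson order.trans zero_le_one)
  have R1: "\<forall>i<n. reachable (hist (B i)) (L i, hview V 0 ha i)"
  proof (intro allI impI)
    fix i assume i: "i < n"
    show "reachable (hist (B i)) (L i, hview V 0 ha i)"
    proof (rule reachable.init)
      show "initial (hist (B i)) (L i, hview V 0 ha i)"
        unfolding initial_def
      proof (intro conjI allI ballI)
        show "fst (L i, hview V 0 ha i) = loc0 (hist (B i))" by (simp add: hist_def L)
        fix x show "0 \<le> snd (L i, hview V 0 ha i) x"
          using V0 hapos[of "(i, _)"] by (cases x) (auto simp: hview_def intro: order.trans[OF zero_le_one])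
      next
        have "c0 (B i) (hview V 0 ha i \<circ> Orig)" using c0 i by simp
        moreover have "hview V 0 ha i H0 = 0" by (simp add: hview_def)
        moreover have "\<forall>a\<in>acts (B i). hview V 0 ha i (HA a) > 0"
          using hapos by (auto simp: hview_def intro: less_le_trans[OF zero_less_one])
        ultimately show "c0 (hist (B i)) (snd (L i, hview V 0 ha i))" by (simp add: hist_def)
      qed
    qed
  qed
  have R2: "\<forall>i<n. \<exists>ss ls. run (B i) ss ls \<and> ss ! length ls = (L i, view V i)
       \<and> (\<forall>a. (i,a) \<in> \<Union>\<gamma> \<longrightarrow> RC ls a (ha (i,a)) (k (i,a)))"
  proof (intro allI impI)
    fix i assume i: "i < n"
    show "\<exists>ss ls. run (B i) ss ls \<and> ss ! length ls = (L i, view V i)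
       \<and> (\<forall>a. (i,a) \<in> \<Union>\<gamma> \<longrightarrow> RC ls a (ha (i,a)) (k (i,a)))"
    proof (intro exI conjI allI impI)
      show "run (B i) [(L i, view V i)] []"
        unfolding run_def initial_def using c0 i V0 by (auto simp: L view_def)
      show "[(L i, view V i)] ! length [] = (L i, view V i)" by simp
      fix a assume "(i,a) \<in> \<Union>\<gamma>"
      then show "RC [] a (ha (i, a)) (k (i, a))"
        unfolding RC_def using Kk haK by fastforce
    qed
  qed
  show ?thesis
    unfolding INV_def s fst_conv snd_conv
    by (rule exI[of _ 0], rule exI[of _ ha], rule exI[of _ hg]) (use n1 n2 R1 R2 Es Sp in simp)
qed


lemma hview_vshift_Orig: "vshift (hview V h0 ha i) t \<circ> Orig = view (vshift V t) i"
  by (auto simp: hview_def vshift_def view_def)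

lemma edges_compose: "(L, \<alpha>, g, r, L') \<in> edges (compose n B \<gamma>) \<longleftrightarrow> \<alpha> \<in> \<gamma> \<and>
        (\<exists>e. (\<forall>i a. (i, a) \<in> \<alpha> \<longrightarrow> e i \<in> edges (B i) \<and> esrc (e i) = L i \<and> eact (e i) = a)
           \<and> g = (\<lambda>V. \<forall>i\<in>fst ` \<alpha>. eguard (e i) (view V i))
           \<and> r = {(i, c). i \<in> fst ` \<alpha> \<and> c \<in> ereset (e i)}
           \<and> L' = (\<lambda>j. if j \<in> fst ` \<alpha> then etgt (e j) else L j))"
  by (simp add: compose_def)

lemma edge_split: "e = (esrc e, eact e, eguard e, ereset e, etgt e)"
  by (simp add: esrc_def eact_def eguard_def ereset_def etgt_def)

lemma INV_delay:
  assumes fg: "finite \<gamma>"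
    and inv: "INV n B \<gamma> k (l, v)" and d: "d \<ge> 0"
    and tp: "\<forall>t\<in>{0..d}. \<forall>i<n. tpc (B i) (l i) (view (vshift v t) i)"
  shows "INV n B \<gamma> k (l, vshift v d)"
proof -
  from inv obtain h0 ha hg where h0: "h0 \<ge> 0" and ha0: "\<forall>x. ha x \<ge> 0" and hg0: "\<forall>\<alpha>\<in>\<gamma>. hg \<alpha> \<ge> 0"
    and R1: "\<forall>i<n. reachable (hist (B i)) (l i, hview v h0 ha i)"
    and R2: "\<forall>i<n. \<exists>ss ls. run (B i) ss ls \<and> ss ! length ls = (l i, view v i)
       \<and> (\<forall>a. (i,a) \<in> \<Union>\<gamma> \<longrightarrow> RC ls a (ha (i,a)) (k (i,a)))"
    and Es: "Estar \<gamma> ha hg" and Sp: "Sep \<gamma> k hg"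
    unfolding INV_def by auto
  define ha' where "ha' = (\<lambda>x. ha x + d)"
  define hg' where "hg' = (\<lambda>x. hg x + d)"
  have n1: "\<forall>x. ha' x \<ge> 0" using ha0 d by (simp add: ha'_def)
  have n2: "\<forall>\<alpha>\<in>\<gamma>. hg' \<alpha> \<ge> 0" using hg0 d by (simp add: hg'_def)
  have R1': "\<forall>i<n. reachable (hist (B i)) (l i, hview (vshift v d) (h0+d) ha' i)"
  proof (intro allI impI)
    fix i assume i: "i < n"
    have "step (hist (B i)) (l i, hview v h0 ha i) (Del d) (l i, vshift (hview v h0 ha i) d)"
      by (rule step.delay) (use d tp i in \<open>simp_all add: hview_vshift_Orig\<close>)
    then have "step (hist (B i)) (l i, hview v h0 ha i) (Del d) (l i, hview (vshift v d) (h0+d) ha' i)"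
      by (simp add: hview_vshift ha'_def)
    then show "reachable (hist (B i)) (l i, hview (vshift v d) (h0+d) ha' i)"
      using R1 i reachable.stp by blast
  qed
  have R2': "\<forall>i<n. \<exists>ss ls. run (B i) ss ls \<and> ss ! length ls = (l i, view (vshift v d) i)
       \<and> (\<forall>a. (i,a) \<in> \<Union>\<gamma> \<longrightarrow> RC ls a (ha' (i,a)) (k (i,a)))"
  proof (intro allI impI)
    fix i assume i: "i < n"
    obtain ss ls where r: "run (B i) ss ls" and last: "ss ! length ls = (l i, view v i)"
      and rc: "\<forall>a. (i,a) \<in> \<Union>\<gamma> \<longrightarrow> RC ls a (ha (i,a)) (k (i,a))" using R2 i by blast
    have st: "step (B i) (ss ! length ls) (Del d) (l i, view (vshift v d) i)"
      unfolding last view_vshift by (rule step.delay) (use d tp i in \<open>simp_all add: view_vshift\<close>)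
    have "length ss = Suc (length ls)" using r by (simp add: run_def)
    then show "\<exists>ss ls. run (B i) ss ls \<and> ss ! length ls = (l i, view (vshift v d) i)
       \<and> (\<forall>a. (i,a) \<in> \<Union>\<gamma> \<longrightarrow> RC ls a (ha' (i,a)) (k (i,a)))"
      using run_ext[OF r st] rc RC_del d
      by (intro exI[of _ "ss@[(l i, view (vshift v d) i)]"] exI[of _ "ls@[Del d]"])
         (auto simp: nth_append ha'_def intro!: RC_del)
  qed
  have Es': "Estar \<gamma> ha' hg'"
    unfolding Estar_def
  proof
    fix x assume x: "x \<in> \<Union>\<gamma>"
    have "ha x = Min (hg ` {\<alpha>\<in>\<gamma>. x\<in>\<alpha>})" using Es x unfolding Estar_def by blast
    moreover have "Min (hg' ` {\<alpha>\<in>\<gamma>. x\<in>\<alpha>}) = Min (hg ` {\<alpha>\<in>\<gamma>. x\<in>\<alpha>}) + d"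
      unfolding hg'_def by (rule Min_add_commute) (use fg x in auto)
    ultimately show "ha' x = Min (hg' ` {\<alpha>\<in>\<gamma>. x\<in>\<alpha>})" by (simp add: ha'_def)
  qed
  have Sp': "Sep \<gamma> k hg'" using Sp by (simp add: Sep_def hg'_def)
  show ?thesis
    unfolding INV_def fst_conv snd_conv
    by (rule exI[of _ "h0+d"], rule exI[of _ ha'], rule exI[of _ hg']) (use h0 d n1 n2 R1' R2' Es' Sp' in simp)
qed


lemma vreset_hview_Orig: "vreset (hview V h0 ha i) (Orig ` R \<union> {HA a}) \<circ> Orig = vreset (view V i) R"
  by (auto simp: hview_def vreset_def view_def)

lemma INV_disc:
  assumes fg: "finite \<gamma>" and wf: "wf_interactions n B \<gamma>"
    and k_sep: "\<forall>x\<in>\<Union>\<gamma>. min_sep (B (fst x)) (snd x) (k x)"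
    and inv: "INV n B \<gamma> k (L, V)"
    and edge: "(L, \<alpha>, g, r, L') \<in> edges (compose n B \<gamma>)" and gV: "g V"
    and tp: "\<forall>i<n. tpc (B i) (L' i) (view (vreset V r) i)"
  shows "INV n B \<gamma> k (L', vreset V r)"
proof -
  from inv obtain h0 ha hg where h0: "h0 \<ge> 0" and ha0: "\<forall>x. ha x \<ge> 0" and hg0: "\<forall>\<alpha>\<in>\<gamma>. hg \<alpha> \<ge> 0"
    and R1: "\<forall>i<n. reachable (hist (B i)) (L i, hview V h0 ha i)"
    and R2: "\<forall>i<n. \<exists>ss ls. run (B i) ss ls \<and> ss ! length ls = (L i, view V i)
       \<and> (\<forall>a. (i,a) \<in> \<Union>\<gamma> \<longrightarrow> RC ls a (ha (i,a)) (k (i,a)))"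
    and Es: "Estar \<gamma> ha hg" and Sp: "Sep \<gamma> k hg"
    unfolding INV_def by auto
  from edge obtain e where a\<gamma>: "\<alpha> \<in> \<gamma>"
    and he: "\<forall>i a. (i, a) \<in> \<alpha> \<longrightarrow> e i \<in> edges (B i) \<and> esrc (e i) = L i \<and> eact (e i) = a"
    and gdef: "g = (\<lambda>V. \<forall>i\<in>fst ` \<alpha>. eguard (e i) (view V i))"
    and rdef: "r = {(i, c). i \<in> fst ` \<alpha> \<and> c \<in> ereset (e i)}"
    and Ldef: "L' = (\<lambda>j. if j \<in> fst ` \<alpha> then etgt (e j) else L j)"
    unfolding edges_compose by blast
  have wfa: "\<forall>(i, a)\<in>\<alpha>. i < n \<and> a \<in> acts (B i)" and uniq: "\<forall>(i, a)\<in>\<alpha>. \<forall>(j, b)\<in>\<alpha>. i = j \<longrightarrow> a = b"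
    using wf a\<gamma> unfolding wf_interactions_def by auto
  have inI: "\<And>i. i \<in> fst ` \<alpha> \<longleftrightarrow> (i, eact (e i)) \<in> \<alpha>"
    using he by force
  have uq: "\<And>i b. i \<in> fst ` \<alpha> \<Longrightarrow> (i, b) \<in> \<alpha> \<longleftrightarrow> b = eact (e i)"
  proof -
    fix i b assume "i \<in> fst ` \<alpha>"
    then have "(i, eact (e i)) \<in> \<alpha>" using inI by blast
    then show "(i, b) \<in> \<alpha> \<longleftrightarrow> b = eact (e i)" using he by metis
  qed
  have nI: "\<And>i b. i \<notin> fst ` \<alpha> \<Longrightarrow> (i, b) \<notin> \<alpha>"
    by force
  have In: "\<And>i. i \<in> fst ` \<alpha> \<Longrightarrow> i < n" using wfa by auto
  define ha' where "ha' = (\<lambda>x. if x \<in> \<alpha> then 0 else ha x)"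
  define hg' where "hg' = hg(\<alpha> := 0)"
  have n1: "\<forall>x. ha' x \<ge> 0" using ha0 by (simp add: ha'_def)
  have n2: "\<forall>\<beta>\<in>\<gamma>. hg' \<beta> \<ge> 0" using hg0 by (simp add: hg'_def)
  have viewr: "\<And>i. view (vreset V r) i = (if i \<in> fst ` \<alpha> then vreset (view V i) (ereset (e i)) else view V i)"
    by (auto simp: view_def vreset_def rdef)
  have hviewI: "\<And>i. i \<in> fst ` \<alpha> \<Longrightarrow>
      vreset (hview V h0 ha i) (Orig ` ereset (e i) \<union> {HA (eact (e i))}) = hview (vreset V r) h0 ha' i"
  proof -
    fix i assume i: "i \<in> fst ` \<alpha>"
    show "vreset (hview V h0 ha i) (Orig ` ereset (e i) \<union> {HA (eact (e i))}) = hview (vreset V r) h0 ha' i"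
    proof
      fix x show "vreset (hview V h0 ha i) (Orig ` ereset (e i) \<union> {HA (eact (e i))}) x = hview (vreset V r) h0 ha' i x"
        using i uq[OF i] by (cases x) (auto simp: vreset_def hview_def rdef ha'_def)
    qed
  qed
  have hviewN: "\<And>i. i \<notin> fst ` \<alpha> \<Longrightarrow> hview (vreset V r) h0 ha' i = hview V h0 ha i"
  proof -
    fix i assume i: "i \<notin> fst ` \<alpha>"
    show "hview (vreset V r) h0 ha' i = hview V h0 ha i"
    proof
      fix x show "hview (vreset V r) h0 ha' i x = hview V h0 ha i x"
        using i nI[OF i] by (cases x) (auto simp: vreset_def hview_def rdef ha'_def)
    qed
  qed
  have cstep: "\<And>i. i \<in> fst ` \<alpha> \<Longrightarrow>
      step (B i) (L i, view V i) (Dis (eact (e i))) (etgt (e i), vreset (view V i) (ereset (e i)))"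
  proof -
    fix i assume i: "i \<in> fst ` \<alpha>"
    have ei: "e i \<in> edges (B i)" "esrc (e i) = L i" using he inI[of i] i by auto
    have "(L i, eact (e i), eguard (e i), ereset (e i), etgt (e i)) \<in> edges (B i)"
      using ei edge_split[of "e i"] by simp
    moreover have "eguard (e i) (view V i)" using gV i unfolding gdef by blast
    moreover have "tpc (B i) (etgt (e i)) (vreset (view V i) (ereset (e i)))"
    proof -
      have "tpc (B i) (L' i) (view (vreset V r) i)" using tp In[OF i] by blast
      then show ?thesis by (simp only: viewr Ldef if_P[OF i])
    qed
    ultimately show "step (B i) (L i, view V i) (Dis (eact (e i))) (etgt (e i), vreset (view V i) (ereset (e i)))"
      by (rule step.disc)
  qed
  have R1': "\<forall>i<n. reachable (hist (B i)) (L' i, hview (vreset V r) h0 ha' i)"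
  proof (intro allI impI)
    fix i assume i: "i < n"
    show "reachable (hist (B i)) (L' i, hview (vreset V r) h0 ha' i)"
    proof (cases "i \<in> fst ` \<alpha>")
      case False then show ?thesis using R1 i by (simp add: Ldef hviewN)
    next
      case True
      have ei: "e i \<in> edges (B i)" "esrc (e i) = L i" using he inI[of i] True by auto
      have "(L i, eact (e i), (\<lambda>w. eguard (e i) (w \<circ> Orig)), Orig ` ereset (e i) \<union> {HA (eact (e i))}, etgt (e i))
              \<in> edges (hist (B i))"
      proof -
        obtain x1 x2 x3 x4 x5 where ex: "e i = (x1,x2,x3,x4,x5)" by (cases "e i") auto
        show ?thesis
          unfolding hist_def ta.simps
          by (rule rev_image_eqI[OF ei(1)]) (use ei(2) in \<open>simp add: ex esrc_def eact_def eguard_def ereset_def etgt_def\<close>)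
      qed
      moreover have "eguard (e i) (hview V h0 ha i \<circ> Orig)" using gV True unfolding gdef hview_Orig by blast
      moreover have "tpc (hist (B i)) (etgt (e i)) (vreset (hview V h0 ha i) (Orig ` ereset (e i) \<union> {HA (eact (e i))}))"
      proof -
        have "tpc (B i) (L' i) (view (vreset V r) i)" using tp i by blast
        then show ?thesis by (simp only: tpc_hist vreset_hview_Orig viewr Ldef if_P[OF True])
      qed
      ultimately have st: "step (hist (B i)) (L i, hview V h0 ha i) (Dis (eact (e i)))
          (etgt (e i), vreset (hview V h0 ha i) (Orig ` ereset (e i) \<union> {HA (eact (e i))}))"
        by (rule step.disc)
      have "reachable (hist (B i)) (etgt (e i), vreset (hview V h0 ha i) (Orig ` ereset (e i) \<union> {HA (eact (e i))}))"
        by (rule reachable.stp[OF R1[rule_format, OF i] st])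
      moreover have "L' i = etgt (e i)" by (simp only: Ldef if_P[OF True])
      ultimately show ?thesis by (simp only: hviewI[OF True])
    qed
  qed
  have kb: "\<And>x. x \<in> \<alpha> \<Longrightarrow> k x \<le> ha x"
  proof -
    fix x assume x: "x \<in> \<alpha>"
    obtain i a where xi: "x = (i, a)" by (cases x)
    have i: "i \<in> fst ` \<alpha>" using x xi by force
    have a: "a = eact (e i)" using uq[OF i] x xi by simp
    obtain ss ls where r: "run (B i) ss ls" and last: "ss ! length ls = (L i, view V i)"
      and rc: "\<forall>a. (i,a) \<in> \<Union>\<gamma> \<longrightarrow> RC ls a (ha (i,a)) (k (i,a))" using R2 In[OF i] by blast
    have xU: "x \<in> \<Union>\<gamma>" using x a\<gamma> by blast
    show "k x \<le> ha x"
      unfolding xi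
      by (rule RC_exec[OF r _ _ rc[rule_format]])
         (use cstep[OF i] last a xi xU k_sep[rule_format, OF xU] in auto)
  qed
  have R2': "\<forall>i<n. \<exists>ss ls. run (B i) ss ls \<and> ss ! length ls = (L' i, view (vreset V r) i)
       \<and> (\<forall>a. (i,a) \<in> \<Union>\<gamma> \<longrightarrow> RC ls a (ha' (i,a)) (k (i,a)))"
  proof (intro allI impI)
    fix i assume i: "i < n"
    obtain ss ls where r: "run (B i) ss ls" and last: "ss ! length ls = (L i, view V i)"
      and rc: "\<forall>a. (i,a) \<in> \<Union>\<gamma> \<longrightarrow> RC ls a (ha (i,a)) (k (i,a))" using R2 i by blast
    show "\<exists>ss ls. run (B i) ss ls \<and> ss ! length ls = (L' i, view (vreset V r) i)
       \<and> (\<forall>a. (i,a) \<in> \<Union>\<gamma> \<longrightarrow> RC ls a (ha' (i,a)) (k (i,a)))"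
    proof (cases "i \<in> fst ` \<alpha>")
      case False
      then show ?thesis using r last rc nI[OF False]
        by (intro exI[of _ ss] exI[of _ ls]) (simp add: Ldef viewr ha'_def)
    next
      case True
      define s' where "s' = (etgt (e i), vreset (view V i) (ereset (e i)))"
      have st: "step (B i) (ss ! length ls) (Dis (eact (e i))) s'"
        unfolding last s'_def by (rule cstep[OF True])
      have len: "length ss = Suc (length ls)" using r by (simp add: run_def)
      have rc': "\<forall>a. (i,a) \<in> \<Union>\<gamma> \<longrightarrow> RC (ls @ [Dis (eact (e i))]) a (ha' (i,a)) (k (i,a))"
      proof (intro allI impI)
        fix a assume ia: "(i,a) \<in> \<Union>\<gamma>"
        show "RC (ls @ [Dis (eact (e i))]) a (ha' (i,a)) (k (i,a))"
        proof (cases "a = eact (e i)")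
          case True
          then show ?thesis using inI \<open>i \<in> fst ` \<alpha>\<close> by (simp add: ha'_def RC_self)
        next
          case False
          then have "(i,a) \<notin> \<alpha>" using uq[OF \<open>i \<in> fst ` \<alpha>\<close>] by simp
          then show ?thesis using RC_other[OF rc[rule_format, OF ia]] False by (simp add: ha'_def)
        qed
      qed
      show ?thesis using run_ext[OF r st] len rc' True
        by (intro exI[of _ "ss@[s']"] exI[of _ "ls@[Dis (eact (e i))]"])
           (simp add: nth_append s'_def Ldef viewr)
    qed
  qed
  have Es': "Estar \<gamma> ha' hg'"
    unfolding Estar_def
  proof
    fix x assume x: "x \<in> \<Union>\<gamma>"
    have fS: "finite {\<beta>\<in>\<gamma>. x\<in>\<beta>}" using fg by simp
    show "ha' x = Min (hg' ` {\<beta>\<in>\<gamma>. x\<in>\<beta>})"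
    proof (cases "x \<in> \<alpha>")
      case True
      have "Min (hg' ` {\<beta>\<in>\<gamma>. x\<in>\<beta>}) = 0"
      proof (rule Min_eqI)
        show "finite (hg' ` {\<beta>\<in>\<gamma>. x\<in>\<beta>})" using fS by simp
        show "\<And>y. y \<in> hg' ` {\<beta>\<in>\<gamma>. x\<in>\<beta>} \<Longrightarrow> 0 \<le> y" using n2 by auto
        show "0 \<in> hg' ` {\<beta>\<in>\<gamma>. x\<in>\<beta>}" using True a\<gamma> by (auto simp: hg'_def intro!: rev_image_eqI[of \<alpha>])
      qed
      then show ?thesis using True by (simp add: ha'_def)
    next
      case False
      have "hg' ` {\<beta>\<in>\<gamma>. x\<in>\<beta>} = hg ` {\<beta>\<in>\<gamma>. x\<in>\<beta>}"
        using False by (auto simp: hg'_def intro!: image_cong)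
      moreover have "ha x = Min (hg ` {\<beta>\<in>\<gamma>. x\<in>\<beta>})" using Es x unfolding Estar_def by blast
      ultimately show ?thesis using False by (simp add: ha'_def)
    qed
  qed
  have low: "\<And>a \<beta>. a \<in> \<alpha> \<Longrightarrow> \<beta> \<in> \<gamma> \<Longrightarrow> a \<in> \<beta> \<Longrightarrow> k a \<le> hg \<beta>"
  proof -
    fix a \<beta> assume a: "a \<in> \<alpha>" and b: "\<beta> \<in> \<gamma>" "a \<in> \<beta>"
    have aU: "a \<in> \<Union>\<gamma>" using a a\<gamma> by blast
    have "ha a = Min (hg ` {\<beta>\<in>\<gamma>. a\<in>\<beta>})" using Es aU unfolding Estar_def by blast
    also have "\<dots> \<le> hg \<beta>" using fg b by (intro Min_le) auto
    finally show "k a \<le> hg \<beta>" using kb[OF a] by simp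
  qed
  have Sp': "Sep \<gamma> k hg'"
    unfolding Sep_def
  proof (intro ballI impI)
    fix a \<beta>1 \<beta>2 assume a: "a \<in> \<Union>\<gamma>" and b: "\<beta>1 \<in> \<gamma>" "\<beta>2 \<in> \<gamma>" and c: "\<beta>1 \<noteq> \<beta>2 \<and> a \<in> \<beta>1 \<and> a \<in> \<beta>2"
    show "k a \<le> \<bar>hg' \<beta>1 - hg' \<beta>2\<bar>"
    proof (cases "\<beta>1 = \<alpha>")
      case True
      then have "k a \<le> hg \<beta>2" using low c b by blast
      then show ?thesis using True c hg0 b by (auto simp: hg'_def)
    next
      case F1: False
      show ?thesis
      proof (cases "\<beta>2 = \<alpha>")
        case True
        then have "k a \<le> hg \<beta>1" using low c b by blast
        then show ?thesis using True c hg0 b by (auto simp: hg'_def)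
      next
        case False
        then show ?thesis using F1 Sp a b c by (simp add: hg'_def Sep_def)
      qed
    qed
  qed
  show ?thesis
    unfolding INV_def fst_conv snd_conv
    by (rule exI[of _ h0], rule exI[of _ ha'], rule exI[of _ hg']) (use h0 n1 n2 R1' R2' Es' Sp' in simp)
qed


theorem corollary2:
  fixes n :: nat
    and B :: "nat \<Rightarrow> ('l,'a,'c) ta"
    and \<gamma> :: "(nat \<times> 'a) set set"
    and k :: "nat \<times> 'a \<Rightarrow> real"
    and CI :: "nat \<Rightarrow> 'l \<times> (('a,'c) hclock \<Rightarrow> real) \<Rightarrow> bool"
    and II :: "(nat \<Rightarrow> 'l) \<Rightarrow> bool"
  assumes fin_acts: "\<forall>i<n. finite (acts (B i))"
    and edge_acts: "\<forall>i<n. \<forall>e\<in>edges (B i). eact e \<in> acts (B i)"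
    and wf: "wf_interactions n B \<gamma>"
    and k_nonneg: "\<forall>x\<in>\<Union>\<gamma>. k x \<ge> 0"
    and k_sep: "\<forall>x\<in>\<Union>\<gamma>. min_sep (B (fst x)) (snd x) (k x)"
    and CI_inv: "\<forall>i<n. invariant (hist (B i)) (CI i)"
    and II_inv: "invariant (compose n B \<gamma>) (\<lambda>s. II (fst s))"
  shows "invariant (compose n B \<gamma>) (Phi n \<gamma> CI II k)"
proof -
  have fg: "finite \<gamma>" using fin_gamma[OF fin_acts wf] by auto
  have I: "INV n B \<gamma> k s" if "reachable (compose n B \<gamma>) s" for s
    using that
  proof (induction rule: reachable.induct)
    case (init s) then show ?case by (rule INV_init[OF fin_acts wf k_nonneg])
  next
    case (stp s lb s')
    from stp.hyps(2) show ?case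
    proof (cases rule: step.cases)
      case (delay d l v)
      then show ?thesis using INV_delay[OF fg, of n B k l v d] stp.IH by simp
    next
      case (disc l a g r l' v)
      then show ?thesis using INV_disc[OF fg wf k_sep, of l v a g r l'] stp.IH by simp
    qed
  qed
  show ?thesis
    unfolding invariant_def
  proof (intro allI impI)
    fix s assume r: "reachable (compose n B \<gamma>) s"
    obtain h0 ha hg where h0: "h0 \<ge> 0" and ha0: "\<forall>x. ha x \<ge> 0" and hg0: "\<forall>\<alpha>\<in>\<gamma>. hg \<alpha> \<ge> 0"
      and R1: "\<forall>i<n. reachable (hist (B i)) (fst s i, hview (snd s) h0 ha i)"
      and Es: "Estar \<gamma> ha hg" and Sp: "Sep \<gamma> k hg"
      using I[OF r] unfolding INV_def by blast
    have "\<forall>i<n. CI i (fst s i, hview (snd s) h0 ha i)" using R1 CI_inv unfolding invariant_def by blast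
    moreover have "II (fst s)" using II_inv r unfolding invariant_def by blast
    ultimately show "Phi n \<gamma> CI II k s"
      unfolding Phi_def using h0 ha0 hg0 Es Sp by blast
  qed
qed

end
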